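(* Let $h(\alpha_1,\ldots,\alpha_r)$ be a rational function. (1) There exists a set $K\subset\mathbb{Z}^r$ contained in a finite union of hyperplanes such that if $h$ is N-small then $\lim_{\xi\to\infty} h(\xi^s)$ is finite for all $s\in\mathbb{Z}^r\setminus K$. (2) If $K\subset \mathbb{Z}^r$ is contained in a finite union of hyperplanes and $\lim_{\xi\to\infty} h(\xi^s)$ is finite for all $s\in\mathbb{Z}^r\setminus K$, then $h$ is N-small.
   Context: For $f\in \mathbb{Z}[\alpha_1^{\pm 1},\ldots,\alpha_r^{\pm 1}]$ the Newton polytope $\mathcal N(f)\subset\mathbb{R}^r$ is the convex hull of the exponent vectors of the monomials of $f$ with nonzero coefficient. A rational function $h=f_1/f_2$ with $f_1,f_2$ Laurent polynomials is N-small if $\mathcal N(f_1)\subset\mathcal N(f_2)$ (independent of the presentation). For $s\in\mathbb{Z}^r$, $h(\xi^s)$ denotes the one-variable rational function obtained by substituting $\alpha_i=\xi^{s_i}$. *)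

theory Defs
  imports "HOL-Analysis.Analysis"
begin

text \<open>A Laurent polynomial in r variables with integer coefficients is represented by its
  coefficient function on exponent vectors in Z^r (type int^'r), with finite support.\<close>

definition supp_lp :: "(int^'r \<Rightarrow> int) \<Rightarrow> (int^'r) set" where
  "supp_lp f = {e. f e \<noteq> 0}"

definition laurent_poly :: "(int^'r \<Rightarrow> int) \<Rightarrow> bool" where
  "laurent_poly f \<longleftrightarrow> finite (supp_lp f)"

definition real_vec :: "int^'r \<Rightarrow> real^'r" where
  "real_vec e = (\<chi> i. real_of_int (e $ i))"

definition newton_polytope :: "(int^'r \<Rightarrow> int) \<Rightarrow> (real^'r) set" where
  "newton_polytope f = convex hull (real_vec ` supp_lp f)"

text \<open>h = f1/f2 is N-small.\<close>
definition N_small :: "(int^'r \<Rightarrow> int) \<Rightarrow> (int^'r \<Rightarrow> int) \<Rightarrow> bool" where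
  "N_small f1 f2 \<longleftrightarrow> newton_polytope f1 \<subseteq> newton_polytope f2"

definition idot :: "int^'r \<Rightarrow> int^'r \<Rightarrow> int" where
  "idot s e = (\<Sum>i\<in>UNIV. s $ i * e $ i)"

text \<open>Substitution alpha_i = xi^(s_i): the resulting one-variable Laurent polynomial,
  given by its coefficient function int => int, and its evaluation at a real xi.\<close>
definition subst_coeff :: "(int^'r \<Rightarrow> int) \<Rightarrow> int^'r \<Rightarrow> int \<Rightarrow> int" where
  "subst_coeff f s k = (\<Sum>e\<in>{e\<in>supp_lp f. idot s e = k}. f e)"

definition subst_eval :: "(int^'r \<Rightarrow> int) \<Rightarrow> int^'r \<Rightarrow> real \<Rightarrow> real" where
  "subst_eval f s \<xi> = (\<Sum>e\<in>supp_lp f. real_of_int (f e) * \<xi> powi (idot s e))"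

definition finite_limit :: "(int^'r \<Rightarrow> int) \<Rightarrow> (int^'r \<Rightarrow> int) \<Rightarrow> int^'r \<Rightarrow> bool" where
  "finite_limit f1 f2 s \<longleftrightarrow>
     (\<exists>k. subst_coeff f2 s k \<noteq> 0) \<and>
     (\<exists>L. ((\<lambda>\<xi>. subst_eval f1 s \<xi> / subst_eval f2 s \<xi>) \<longlongrightarrow> L) at_top)"

definition in_finite_hyperplanes :: "(int^'r) set \<Rightarrow> bool" where
  "in_finite_hyperplanes K \<longleftrightarrow>
     (\<exists>H :: ((real^'r) \<times> real) set. finite H \<and> (\<forall>(a, c)\<in>H. a \<noteq> 0) \<and>
        K \<subseteq> (\<Union>(a, c)\<in>H. {s. a \<bullet> real_vec s = c}))"

end

theory Submission
  imports Defs
begin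

lemma real_vec_inner: "real_vec s \<bullet> real_vec e = real_of_int (idot s e)"
  by (simp add: inner_vec_def real_vec_def idot_def)

lemma real_vec_diff: "real_vec (a - b) = real_vec a - real_vec b"
  by (simp add: real_vec_def vec_eq_iff)

lemma real_vec_inj: "real_vec a = real_vec b \<Longrightarrow> a = b"
  by (simp add: real_vec_def vec_eq_iff)

lemma powi_neg_lim:
  assumes "(n::int) < 0"
  shows "((\<lambda>x::real. x powi n) \<longlongrightarrow> 0) at_top"
proof -
  have "((\<lambda>x::real. inverse x ^ nat (-n)) \<longlongrightarrow> 0 ^ nat (-n)) at_top"
    by (intro tendsto_intros tendsto_inverse_0_at_top filterlim_ident)
  moreover have "(0::real) ^ nat (-n) = 0" using assms by simp
  moreover have "(\<lambda>x::real. x powi n) = (\<lambda>x. inverse x ^ nat (-n))"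
    using assms by (auto simp: power_int_def)
  ultimately show ?thesis by simp
qed

lemma lead_lim:
  assumes "laurent_poly f" "\<forall>e\<in>supp_lp f. idot s e \<le> d"
  shows "((\<lambda>\<xi>. subst_eval f s \<xi> / \<xi> powi d) \<longlongrightarrow> real_of_int (subst_coeff f s d)) at_top"
proof -
  have fin: "finite (supp_lp f)" using assms(1) by (simp add: laurent_poly_def)
  have ev: "eventually (\<lambda>\<xi>. (\<Sum>e\<in>supp_lp f. real_of_int (f e) * \<xi> powi (idot s e - d))
              = subst_eval f s \<xi> / \<xi> powi d) at_top"
    using eventually_gt_at_top[of "0::real"]
  proof eventually_elim
    case (elim \<xi>)
    then show ?case
      by (simp add: subst_eval_def sum_divide_distrib power_int_diff)
  qed
  have trm: "((\<lambda>\<xi>. real_of_int (f e) * \<xi> powi (idot s e - d)) \<longlongrightarrow>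
        real_of_int (f e) * (if idot s e = d then 1 else 0)) at_top" if "e \<in> supp_lp f" for e
  proof (cases "idot s e = d")
    case True then show ?thesis by simp
  next
    case False
    then have "idot s e - d < 0" using assms(2) that by force
    from tendsto_mult[OF tendsto_const powi_neg_lim[OF this]] False
    show ?thesis by simp
  qed
  have "((\<lambda>\<xi>. \<Sum>e\<in>supp_lp f. real_of_int (f e) * \<xi> powi (idot s e - d)) \<longlongrightarrow>
        (\<Sum>e\<in>supp_lp f. real_of_int (f e) * (if idot s e = d then 1 else 0))) at_top"
    by (rule tendsto_sum) (rule trm)
  moreover have "(\<Sum>e\<in>supp_lp f. real_of_int (f e) * (if idot s e = d then 1 else 0))
      = real_of_int (subst_coeff f s d)"
    unfolding subst_coeff_def of_int_sum using sum.inter_filter[OF fin, of "\<lambda>e. real_of_int (f e)"]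
    by (simp add: if_distrib cong: if_cong)
  ultimately show ?thesis using tendsto_cong[OF ev] by simp
qed

lemma avoid0:
  fixes U :: "(real^'r) set"
  assumes "open U" "w \<in> U" "finite A" "0 \<notin> A"
  shows "\<exists>w'\<in>U. \<forall>a\<in>A. a \<bullet> w' \<noteq> 0"
  using assms(3,4)
proof (induction A rule: finite_induct)
  case empty then show ?case using assms(2) by blast
next
  case (insert b A)
  then obtain w' where w': "w' \<in> U" "\<forall>a\<in>A. a \<bullet> w' \<noteq> 0" by auto
  have b0: "b \<noteq> 0" using insert.prems by auto
  show ?case
  proof (cases "b \<bullet> w' = 0")
    case False then show ?thesis using w' by auto
  next
    case True
    obtain \<epsilon> where ep: "\<epsilon> > 0" "ball w' \<epsilon> \<subseteq> U" using assms(1) w'(1) open_contains_ball by blast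
    obtain j where j: "b $ j \<noteq> 0" using b0 by (auto simp: vec_eq_iff)
    define v :: "real^'r" where "v = axis j 1"
    define F where "F = (\<lambda>a. - (a \<bullet> w') / (a \<bullet> v)) ` A"
    have "finite F" using insert.hyps by (simp add: F_def)
    then have "infinite ({0<..<\<epsilon>} - F)" using ep(1) by (intro Diff_infinite_finite infinite_Ioo)
    then obtain t where t: "t \<in> {0<..<\<epsilon>}" "t \<notin> F"
      by (metis Diff_iff finite.emptyI ex_in_conv)
    define w'' where "w'' = w' + t *\<^sub>R v"
    have "dist w' w'' = t" using t by (simp add: w''_def v_def dist_norm)
    then have "w'' \<in> U" using ep t by auto
    moreover have "b \<bullet> w'' \<noteq> 0" using True t j by (simp add: w''_def v_def inner_add_right inner_axis)
    moreover have "a \<bullet> w'' \<noteq> 0" if a: "a \<in> A" for a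
    proof
      assume h: "a \<bullet> w'' = 0"
      then have h2: "a \<bullet> w' + t * (a \<bullet> v) = 0" by (simp add: w''_def inner_add_right)
      then have "a \<bullet> v \<noteq> 0" using w'(2) a by auto
      with h2 have "t = - (a \<bullet> w') / (a \<bullet> v)" by (simp add: field_simps)
      then show False using t a by (auto simp: F_def)
    qed
    ultimately show ?thesis by auto
  qed
qed

lemma lattice_point:
  fixes U :: "(real^'r) set"
  assumes "open U" "w \<in> U" "\<forall>x\<in>U. \<forall>t>0. t *\<^sub>R x \<in> U" "finite H" "\<forall>(a, c)\<in>H. a \<noteq> 0"
  shows "\<exists>s. real_vec s \<in> U \<and> (\<forall>(a, c)\<in>H. a \<bullet> real_vec s \<noteq> c)"
proof -
  define A where "A = fst ` H"
  have "finite A" "0 \<notin> A" using assms(4,5) by (auto simp: A_def)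
  define U' where "U' = U \<inter> {x. \<forall>a\<in>A. a \<bullet> x \<noteq> 0}"
  have "U' = U \<inter> (\<Inter>a\<in>A. {x. a \<bullet> x \<noteq> 0})" by (auto simp: U'_def)
  moreover have "open {x::real^'r. a \<bullet> x \<noteq> 0}" for a
    by (rule open_Collect_neq) (intro continuous_intros)+
  ultimately have oU': "open U'" using \<open>finite A\<close> assms(1) by auto
  obtain w' where w': "w' \<in> U'" using avoid0[OF assms(1,2) \<open>finite A\<close> \<open>0 \<notin> A\<close>] by (auto simp: U'_def)
  have cone: "t *\<^sub>R x \<in> U'" if "x \<in> U'" "t > 0" for x t
    using that assms(3) by (auto simp: U'_def)
  obtain \<epsilon> where ep: "\<epsilon> > 0" "ball w' \<epsilon> \<subseteq> U'" using oU' w' open_contains_ball by blast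
  obtain N :: nat where N: "real CARD('r) / \<epsilon> < real N" using reals_Archimedean2 by blast
  have Npos: "real N > 0" using N ep(1) by (smt (verit) divide_pos_pos of_nat_0_less_iff zero_less_card_finite)
  have NE: "real CARD('r) < real N * \<epsilon>" using N ep(1) by (simp add: field_simps)
  define q :: "int^'r" where "q = (\<chi> i. \<lfloor>real N * w' $ i\<rfloor>)"
  have "norm (real_vec q - real N *\<^sub>R w') \<le> (\<Sum>i\<in>UNIV. \<bar>(real_vec q - real N *\<^sub>R w') $ i\<bar>)"
    by (rule norm_le_l1_cart)
  also have "\<dots> \<le> (\<Sum>i\<in>(UNIV::'r set). 1)"
    by (intro sum_mono) (simp add: q_def real_vec_def, linarith)
  also have "\<dots> = real CARD('r)" by simp
  finally have nq: "norm (real_vec q - real N *\<^sub>R w') < real N * \<epsilon>" using NE by linarith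
  have "(1 / real N) *\<^sub>R real_vec q \<in> ball w' \<epsilon>"
  proof -
    have "real_vec q - real N *\<^sub>R w' = real N *\<^sub>R ((1 / real N) *\<^sub>R real_vec q - w')"
      using Npos by (simp add: algebra_simps)
    then have "norm (real_vec q - real N *\<^sub>R w') = real N * norm ((1 / real N) *\<^sub>R real_vec q - w')"
      using Npos by simp
    with nq Npos have "norm ((1 / real N) *\<^sub>R real_vec q - w') < \<epsilon>" by simp
    then show ?thesis by (simp add: dist_norm norm_minus_commute)
  qed
  then have "real N *\<^sub>R ((1 / real N) *\<^sub>R real_vec q) \<in> U'" using ep(2) cone Npos by blast
  then have qU: "real_vec q \<in> U'" using Npos by simp
  define F where "F = (\<lambda>(a, c). c / (a \<bullet> real_vec q)) ` H"
  have "finite F" using assms(4) by (simp add: F_def)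
  then have "finite ((real :: nat \<Rightarrow> real) -` F)" by (rule finite_vimageI) (simp add: inj_def)
  then have "finite {k::nat. real k \<in> F}" by (simp add: vimage_def)
  then have "infinite ({1..} - {k::nat. real k \<in> F})"
    by (intro Diff_infinite_finite infinite_Ici)
  then obtain k :: nat where k: "k \<ge> 1" "real k \<notin> F"
    by (metis (no_types, lifting) Diff_iff atLeast_iff finite.emptyI mem_Collect_eq ex_in_conv)
  define s :: "int^'r" where "s = (\<chi> i. int k * q $ i)"
  have rs: "real_vec s = real k *\<^sub>R real_vec q" by (simp add: s_def real_vec_def vec_eq_iff)
  have "real_vec s \<in> U" using cone[OF qU, of "real k"] k(1) by (simp add: rs U'_def)
  moreover have "a \<bullet> real_vec s \<noteq> c" if "(a, c) \<in> H" for a c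
  proof
    assume h: "a \<bullet> real_vec s = c"
    have "a \<in> A" using that by (force simp: A_def)
    then have "a \<bullet> real_vec q \<noteq> 0" using qU by (auto simp: U'_def)
    moreover have "real k * (a \<bullet> real_vec q) = c" using h by (simp add: rs)
    ultimately have "real k = c / (a \<bullet> real_vec q)" by (simp add: field_simps)
    then show False using k(2) that by (force simp: F_def)
  qed
  ultimately show ?thesis by auto
qed


definition GH :: "(int^'r) set \<Rightarrow> ((real^'r) \<times> real) set" where
  "GH S = (\<lambda>(a, b). (real_vec (a - b), 0)) ` {(a, b). a \<in> S \<and> b \<in> S \<and> a \<noteq> b}"

lemma GH_finite: "finite S \<Longrightarrow> finite (GH S)"
proof -
  assume "finite S"
  then have "finite (S \<times> S)" by simp
  moreover have "{(a, b). a \<in> S \<and> b \<in> S \<and> a \<noteq> b} \<subseteq> S \<times> S" by auto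
  ultimately show ?thesis unfolding GH_def by (meson finite_imageI finite_subset)
qed

lemma GH_nz: "\<forall>(a, c)\<in>GH S. a \<noteq> 0"
  by (auto simp: GH_def real_vec_diff dest: real_vec_inj)

lemma GH_gen:
  assumes "\<forall>(a, c)\<in>GH S. a \<bullet> real_vec s \<noteq> c" "a \<in> S" "b \<in> S" "idot s a = idot s b"
  shows "a = b"
proof (rule ccontr)
  assume "a \<noteq> b"
  then have "(real_vec (a - b), 0) \<in> GH S" using assms(2,3) by (force simp: GH_def)
  then have "real_vec (a - b) \<bullet> real_vec s \<noteq> 0" using assms(1) by auto
  moreover have "real_vec (a - b) \<bullet> real_vec s = 0"
    using assms(4) by (simp add: real_vec_diff inner_diff_left inner_diff_right inner_commute[of _ "real_vec s"] real_vec_inner)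
  ultimately show False by simp
qed

lemma top_unique:
  assumes "laurent_poly f" "supp_lp f \<noteq> {}"
    and gen: "\<And>a b. a \<in> supp_lp f \<Longrightarrow> b \<in> supp_lp f \<Longrightarrow> idot s a = idot s b \<Longrightarrow> a = b"
  obtains e0 where "e0 \<in> supp_lp f" "\<forall>e\<in>supp_lp f. idot s e \<le> idot s e0"
    "subst_coeff f s (idot s e0) = f e0"
proof -
  have fin: "finite (supp_lp f)" using assms(1) by (simp add: laurent_poly_def)
  define d where "d = Max (idot s ` supp_lp f)"
  have "d \<in> idot s ` supp_lp f" unfolding d_def using fin assms(2) by (intro Max_in) auto
  then obtain e0 where e0: "e0 \<in> supp_lp f" "idot s e0 = d" by auto
  have le: "\<forall>e\<in>supp_lp f. idot s e \<le> idot s e0" using fin e0 by (auto simp: d_def)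
  have "{e \<in> supp_lp f. idot s e = idot s e0} = {e0}" using e0(1) gen by auto
  then have "subst_coeff f s (idot s e0) = f e0" by (simp add: subst_coeff_def)
  with e0(1) le show ?thesis using that by blast
qed

lemma part1:
  assumes "laurent_poly f1" "laurent_poly f2" "supp_lp f2 \<noteq> {}" "N_small f1 f2"
    and gen: "\<And>a b. a \<in> supp_lp f2 \<Longrightarrow> b \<in> supp_lp f2 \<Longrightarrow> idot s a = idot s b \<Longrightarrow> a = b"
  shows "finite_limit f1 f2 s"
proof -
  obtain e2 where e2: "e2 \<in> supp_lp f2" "\<forall>e\<in>supp_lp f2. idot s e \<le> idot s e2"
    "subst_coeff f2 s (idot s e2) = f2 e2"
    using top_unique[OF assms(2,3) gen] by blast
  define d where "d = idot s e2"
  have c2: "f2 e2 \<noteq> 0" using e2(1) by (simp add: supp_lp_def)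
  have le1: "idot s e \<le> d" if "e \<in> supp_lp f1" for e
  proof -
    have "convex hull (real_vec ` supp_lp f2) \<subseteq> {x. real_vec s \<bullet> x \<le> real_of_int d}"
      by (rule hull_minimal) (use e2(2) in \<open>auto simp: real_vec_inner d_def convex_halfspace_le\<close>)
    moreover have "real_vec e \<in> newton_polytope f1"
      unfolding newton_polytope_def using that by (intro hull_inc) auto
    ultimately have "real_vec s \<bullet> real_vec e \<le> real_of_int d"
      using assms(4) by (auto simp: N_small_def newton_polytope_def)
    then show ?thesis by (simp add: real_vec_inner)
  qed
  have L1: "((\<lambda>\<xi>. subst_eval f1 s \<xi> / \<xi> powi d) \<longlongrightarrow> real_of_int (subst_coeff f1 s d)) at_top"
    using lead_lim[OF assms(1)] le1 by blast
  have L2: "((\<lambda>\<xi>. subst_eval f2 s \<xi> / \<xi> powi d) \<longlongrightarrow> real_of_int (f2 e2)) at_top"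
    using lead_lim[OF assms(2), of s d] e2 by (simp add: d_def)
  have ev: "eventually (\<lambda>\<xi>. (subst_eval f1 s \<xi> / \<xi> powi d) / (subst_eval f2 s \<xi> / \<xi> powi d)
      = subst_eval f1 s \<xi> / subst_eval f2 s \<xi>) at_top"
    using eventually_gt_at_top[of "0::real"] by eventually_elim simp
  have "((\<lambda>\<xi>. subst_eval f1 s \<xi> / subst_eval f2 s \<xi>) \<longlongrightarrow>
      real_of_int (subst_coeff f1 s d) / real_of_int (f2 e2)) at_top"
    using tendsto_cong[OF ev] tendsto_divide[OF L1 L2] c2 by simp
  moreover have "subst_coeff f2 s d \<noteq> 0" using e2(3) c2 by (simp add: d_def)
  ultimately show ?thesis unfolding finite_limit_def by blast
qed


lemma part2:
  assumes "laurent_poly f1" "laurent_poly f2" "supp_lp f2 \<noteq> {}" "e1 \<in> supp_lp f1"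
    and lt: "\<forall>e\<in>supp_lp f2. idot s e < idot s e1"
    and gen: "\<And>a b. a \<in> supp_lp f1 \<Longrightarrow> b \<in> supp_lp f1 \<Longrightarrow> idot s a = idot s b \<Longrightarrow> a = b"
    and gen2: "\<And>a b. a \<in> supp_lp f2 \<Longrightarrow> b \<in> supp_lp f2 \<Longrightarrow> idot s a = idot s b \<Longrightarrow> a = b"
  shows "\<not> finite_limit f1 f2 s"
proof
  assume "finite_limit f1 f2 s"
  then obtain L where L: "((\<lambda>\<xi>. subst_eval f1 s \<xi> / subst_eval f2 s \<xi>) \<longlongrightarrow> L) at_top"
    unfolding finite_limit_def by blast
  obtain e0 where e0: "e0 \<in> supp_lp f1" "\<forall>e\<in>supp_lp f1. idot s e \<le> idot s e0"
    "subst_coeff f1 s (idot s e0) = f1 e0"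
    using top_unique[OF assms(1) _ gen] assms(4) by blast
  obtain e2 where e2: "e2 \<in> supp_lp f2" "\<forall>e\<in>supp_lp f2. idot s e \<le> idot s e2"
    "subst_coeff f2 s (idot s e2) = f2 e2"
    using top_unique[OF assms(2,3) gen2] by blast
  define d where "d = idot s e0"
  have c1: "f1 e0 \<noteq> 0" using e0(1) by (simp add: supp_lp_def)
  have c2: "f2 e2 \<noteq> 0" using e2(1) by (simp add: supp_lp_def)
  have lt2: "\<forall>e\<in>supp_lp f2. idot s e < d" using lt e0(2) assms(4) by (force simp: d_def)
  have L1: "((\<lambda>\<xi>. subst_eval f1 s \<xi> / \<xi> powi d) \<longlongrightarrow> real_of_int (f1 e0)) at_top"
    using lead_lim[OF assms(1), of s d] e0 by (simp add: d_def)
  have "{e \<in> supp_lp f2. idot s e = d} = {}" using lt2 by force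
  then have "subst_coeff f2 s d = 0" unfolding subst_coeff_def by (metis sum.empty)
  then have L2: "((\<lambda>\<xi>. subst_eval f2 s \<xi> / \<xi> powi d) \<longlongrightarrow> 0) at_top"
    using lead_lim[OF assms(2), of s d] lt2 by fastforce
  have L3: "((\<lambda>\<xi>. subst_eval f2 s \<xi> / \<xi> powi (idot s e2)) \<longlongrightarrow> real_of_int (f2 e2)) at_top"
    using lead_lim[OF assms(2), of s "idot s e2"] e2 by simp
  have "eventually (\<lambda>\<xi>. subst_eval f2 s \<xi> / \<xi> powi (idot s e2) \<noteq> 0) at_top"
    using tendsto_imp_eventually_ne[OF L3, of 0] c2 by simp
  then have "eventually (\<lambda>\<xi>. subst_eval f2 s \<xi> \<noteq> 0) at_top"
    by (rule eventually_mono) auto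
  then have ev: "eventually (\<lambda>\<xi>. (subst_eval f1 s \<xi> / subst_eval f2 s \<xi>) * (subst_eval f2 s \<xi> / \<xi> powi d)
      = subst_eval f1 s \<xi> / \<xi> powi d) at_top"
    by eventually_elim simp
  have "((\<lambda>\<xi>. (subst_eval f1 s \<xi> / subst_eval f2 s \<xi>) * (subst_eval f2 s \<xi> / \<xi> powi d)) \<longlongrightarrow> L * 0) at_top"
    by (rule tendsto_mult[OF L L2])
  then have "((\<lambda>\<xi>. subst_eval f1 s \<xi> / \<xi> powi d) \<longlongrightarrow> 0) at_top"
    using tendsto_cong[OF ev] by simp
  with L1 have "real_of_int (f1 e0) = 0" using tendsto_unique[OF trivial_limit_at_top_linorder] by blast
  with c1 show False by simp
qed

theorem proposition3p6:
  fixes f1 f2 :: "int^'r \<Rightarrow> int"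
  assumes "laurent_poly f1" and "laurent_poly f2" and "\<exists>e. f2 e \<noteq> 0"
  shows "(\<exists>K. in_finite_hyperplanes K \<and>
            (N_small f1 f2 \<longrightarrow> (\<forall>s. s \<notin> K \<longrightarrow> finite_limit f1 f2 s)))
       \<and> (\<forall>K. in_finite_hyperplanes K \<and> (\<forall>s. s \<notin> K \<longrightarrow> finite_limit f1 f2 s)
            \<longrightarrow> N_small f1 f2)"
proof -
  define S where "S = supp_lp f1 \<union> supp_lp f2"
  have finS: "finite S" using assms(1,2) by (simp add: S_def laurent_poly_def)
  have ne2: "supp_lp f2 \<noteq> {}" using assms(3) by (auto simp: supp_lp_def)
  define K where "K = (\<Union>(a, c)\<in>GH S. {s. a \<bullet> real_vec s = c})"
  have gen: "a = b" if "s \<notin> K" "a \<in> S" "b \<in> S" "idot s a = idot s b" for s a b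
  proof (rule GH_gen[OF _ that(2-4)])
    show "\<forall>(a, c)\<in>GH S. a \<bullet> real_vec s \<noteq> c" using that(1) by (auto simp: K_def)
  qed
  have P1: "\<exists>K. in_finite_hyperplanes K \<and>
            (N_small f1 f2 \<longrightarrow> (\<forall>s. s \<notin> K \<longrightarrow> finite_limit f1 f2 s))"
  proof (intro exI conjI impI allI)
    show "in_finite_hyperplanes K" unfolding in_finite_hyperplanes_def K_def
      using GH_finite[OF finS] GH_nz by blast
  next
    fix s assume "N_small f1 f2" "s \<notin> K"
    then show "finite_limit f1 f2 s"
      using part1[OF assms(1,2) ne2] gen[of s] by (auto simp: S_def)
  qed
  have P2: "N_small f1 f2" if K': "in_finite_hyperplanes K'" "\<forall>s. s \<notin> K' \<longrightarrow> finite_limit f1 f2 s" for K'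
  proof (rule ccontr)
    assume nN: "\<not> N_small f1 f2"
    have "\<exists>e1\<in>supp_lp f1. real_vec e1 \<notin> newton_polytope f2"
    proof (rule ccontr)
      assume "\<not> ?thesis"
      then have "real_vec ` supp_lp f1 \<subseteq> newton_polytope f2" by auto
      then have "newton_polytope f1 \<subseteq> newton_polytope f2"
        unfolding newton_polytope_def by (intro hull_minimal) (auto simp: convex_convex_hull)
      with nN show False by (simp add: N_small_def)
    qed
    then obtain e1 where e1: "e1 \<in> supp_lp f1" "real_vec e1 \<notin> newton_polytope f2" by blast
    have fin2: "finite (supp_lp f2)" using assms(2) by (simp add: laurent_poly_def)
    have "closed (newton_polytope f2)" unfolding newton_polytope_def
      using fin2 by (intro compact_imp_closed compact_convex_hull finite_imp_compact) auto
    then obtain a b where ab: "a \<bullet> real_vec e1 < b" "\<forall>x\<in>newton_polytope f2. b < a \<bullet> x"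
      using separating_hyperplane_closed_point[OF convex_convex_hull] e1(2)
      unfolding newton_polytope_def by blast
    define U where "U = (\<Inter>e\<in>supp_lp f2. {w::real^'r. (real_vec e - real_vec e1) \<bullet> w < 0})"
    have oU: "open U" unfolding U_def using fin2 by (intro open_INT ballI open_halfspace_lt)
    have "- a \<in> U"
    proof -
      have "b < a \<bullet> real_vec e" if "e \<in> supp_lp f2" for e
        using ab(2) that unfolding newton_polytope_def by (auto intro: hull_inc)
      then show ?thesis using ab(1)
        by (fastforce simp: U_def inner_diff_left inner_commute[of "real_vec _" a])
    qed
    moreover have "\<forall>x\<in>U. \<forall>t>0. t *\<^sub>R x \<in> U"
      by (auto simp: U_def mult_pos_neg)
    moreover obtain H where H: "finite H" "\<forall>(a, c)\<in>H. a \<noteq> 0"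
      "K' \<subseteq> (\<Union>(a, c)\<in>H. {s. a \<bullet> real_vec s = c})"
      using K'(1) unfolding in_finite_hyperplanes_def by blast
    moreover have "finite (H \<union> GH S)" using H(1) GH_finite[OF finS] by simp
    moreover have "\<forall>(a, c)\<in>H \<union> GH S. a \<noteq> 0" using H(2) GH_nz by blast
    ultimately obtain s where s: "real_vec s \<in> U" "\<forall>(a, c)\<in>H \<union> GH S. a \<bullet> real_vec s \<noteq> c"
      using lattice_point[OF oU] by blast
    have "s \<notin> K'" using s(2) H(3) by fastforce
    then have fl: "finite_limit f1 f2 s" using K'(2) by blast
    have sK: "s \<notin> K" using s(2) by (auto simp: K_def)
    have lt: "\<forall>e\<in>supp_lp f2. idot s e < idot s e1"
    proof
      fix e assume "e \<in> supp_lp f2"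
      then have "(real_vec e - real_vec e1) \<bullet> real_vec s < 0" using s(1) by (auto simp: U_def)
      then show "idot s e < idot s e1"
        by (simp add: inner_diff_left inner_diff_right inner_commute[of _ "real_vec s"] real_vec_inner)
    qed
    have "\<not> finite_limit f1 f2 s"
      using part2[OF assms(1,2) ne2 e1(1) lt] gen[OF sK] by (auto simp: S_def)
    with fl show False by simp
  qed
  from P1 P2 show ?thesis by blast
qed

end
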